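(* Let $N\geq 1$, $s\in(0,1)$, $p\in[1,\infty)$, and let $(\rho_\varepsilon)_{\varepsilon>0}\subset L^1(\mathbb{R}^N)$ be a family of mollifiers of the form $\rho_\varepsilon(h)=\varepsilon^{-N}\rho(h/\varepsilon)$ for some $\rho\in L^1(\mathbb{R}^N)$. Then for $f\in L^p(\mathbb{R}^N)$ the following are equivalent: (i) $f\in B_{p,\infty}^s(\mathbb{R}^N)$; (ii) $\displaystyle\limsup_{\varepsilon\downarrow 0}\int_{\mathbb{R}^N}\int_{\mathbb{R}^N}\rho_\varepsilon(h)\frac{|f(x+h)-f(x)|^p}{|h|^{sp}}\,\mathrm{d}x\,\mathrm{d}h<\infty$. Moreover, there are constants $0<c\le C$ independent of $f$ such that for all $f\in L^p(\mathbb{R}^N)$ \[ c\,\|f\|_{B_{p,\infty}^s(\mathbb{R}^N)}^p\le \|f\|_{L^p(\mathbb{R}^N)}^p+\sup_{\varepsilon\in(0,1)}\int_{\mathbb{R}^N}\int_{\mathbb{R}^N}\rho_\varepsilon(h)\frac{|f(x+h)-f(x)|^p}{|h|^{sp}}\,\mathrm{d}x\,\mathrm{d}h\le C\,\|f\|_{B_{p,\infty}^s(\mathbb{R}^N)}^p .\]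
   Context: A family $(\rho_\varepsilon)_{\varepsilon>0}\subset L^1(\mathbb{R}^N)$ is a family of mollifiers if $\rho_\varepsilon\ge0$, $\int_{\mathbb{R}^N}\rho_\varepsilon=1$ for every $\varepsilon>0$, and $\lim_{\varepsilon\downarrow0}\int_{|z|\ge\delta}\rho_\varepsilon(z)\,\mathrm{d}z=0$ for every $\delta>0$. For $s\in(0,1)$ and $p\in[1,\infty]$, $B^s_{p,\infty}(\mathbb{R}^N)$ is the set of $f\in L^p(\mathbb{R}^N)$ with $[f]_{B^s_{p,\infty}}:=\sup_{h\neq0}|h|^{-s}\|f(\cdot+h)-f\|_{L^p(\mathbb{R}^N)}<\infty$, normed by $\|f\|_{B^s_{p,\infty}}=\|f\|_{L^p}+[f]_{B^s_{p,\infty}}$. *)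

theory Defs
  imports "HOL-Analysis.Analysis"
begin

text \<open>Real power of an extended nonnegative real (used for p > 0); infinity stays infinity.\<close>
definition epow :: "ennreal \<Rightarrow> real \<Rightarrow> ennreal" where
  "epow x q = (if x = top then top else ennreal (enn2real x powr q))"

text \<open>Membership in L^p(R^N), 1 <= p < infinity, w.r.t. Lebesgue measure.\<close>
definition in_Lp :: "real \<Rightarrow> ('a::euclidean_space \<Rightarrow> real) \<Rightarrow> bool" where
  "in_Lp p f \<longleftrightarrow> f \<in> borel_measurable lebesgue \<and> integrable lebesgue (\<lambda>x. \<bar>f x\<bar> powr p)"

text \<open>L^p norm (possibly infinite).\<close>
definition Lp_norm :: "real \<Rightarrow> ('a::euclidean_space \<Rightarrow> real) \<Rightarrow> ennreal" where
  "Lp_norm p f = epow (\<integral>\<^sup>+ x. ennreal (\<bar>f x\<bar> powr p) \<partial>lebesgue) (1 / p)"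

text \<open>Besov seminorm [f]_{B^s_{p,infinity}} = sup_{h <> 0} |h|^{-s} ||f(.+h) - f||_{L^p}.\<close>
definition besov_seminorm :: "real \<Rightarrow> real \<Rightarrow> ('a::euclidean_space \<Rightarrow> real) \<Rightarrow> ennreal" where
  "besov_seminorm s p f =
     (SUP h\<in>UNIV - {0}. Lp_norm p (\<lambda>x. f (x + h) - f x) / ennreal (norm h powr s))"

definition besov_norm :: "real \<Rightarrow> real \<Rightarrow> ('a::euclidean_space \<Rightarrow> real) \<Rightarrow> ennreal" where
  "besov_norm s p f = Lp_norm p f + besov_seminorm s p f"

definition in_Besov :: "real \<Rightarrow> real \<Rightarrow> ('a::euclidean_space \<Rightarrow> real) \<Rightarrow> bool" where
  "in_Besov s p f \<longleftrightarrow> in_Lp p f \<and> besov_seminorm s p f < top"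

text \<open>Family of mollifiers (indexed by eps > 0).\<close>
definition mollifier_family :: "(real \<Rightarrow> 'a::euclidean_space \<Rightarrow> real) \<Rightarrow> bool" where
  "mollifier_family \<rho> \<longleftrightarrow>
     (\<forall>\<epsilon>>0. integrable lebesgue (\<rho> \<epsilon>) \<and> (AE h in lebesgue. 0 \<le> \<rho> \<epsilon> h)
            \<and> integral\<^sup>L lebesgue (\<rho> \<epsilon>) = 1) \<and>
     (\<forall>\<delta>>0. ((\<lambda>\<epsilon>. \<integral>h. indicator {h. \<delta> \<le> norm h} h * \<rho> \<epsilon> h \<partial>lebesgue) \<longlongrightarrow> 0) (at_right 0))"

text \<open>Rescaled kernel rho_eps(h) = eps^{-N} rho(h/eps).\<close>
definition rescale :: "('a::euclidean_space \<Rightarrow> real) \<Rightarrow> real \<Rightarrow> 'a \<Rightarrow> real" where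
  "rescale \<rho> \<epsilon> h = inverse (\<epsilon> ^ DIM('a)) * \<rho> (scaleR (inverse \<epsilon>) h)"

text \<open>The double integral  int int rho_eps(h) |f(x+h)-f(x)|^p / |h|^{sp} dx dh  (in [0,infinity]).\<close>
definition moll_energy ::
  "(real \<Rightarrow> 'a::euclidean_space \<Rightarrow> real) \<Rightarrow> real \<Rightarrow> real \<Rightarrow> ('a \<Rightarrow> real) \<Rightarrow> real \<Rightarrow> ennreal" where
  "moll_energy \<rho> s p f \<epsilon> =
     (\<integral>\<^sup>+ h. \<integral>\<^sup>+ x. ennreal (\<rho> \<epsilon> h * \<bar>f (x + h) - f x\<bar> powr p / norm h powr (s * p)) \<partial>lebesgue \<partial>lebesgue)"

end

theory Submission
  imports Defs
begin

lemma nn_integral_translate: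
  fixes u :: "'a::euclidean_space \<Rightarrow> ennreal"
  assumes [measurable]: "u \<in> borel_measurable borel"
  shows "(\<integral>\<^sup>+x. u (x + h) \<partial>lborel) = (\<integral>\<^sup>+x. u x \<partial>lborel)"
proof -
  have "(\<integral>\<^sup>+x. u x \<partial>lborel) = (\<integral>\<^sup>+x. u x \<partial>distr lborel borel ((+) h))"
    by (simp add: lborel_distr_plus)
  also have "\<dots> = (\<integral>\<^sup>+x. u (h + x) \<partial>lborel)"
    by (subst nn_integral_distr) auto
  finally show ?thesis by (simp add: add.commute)
qed

lemma pow_tri:
  fixes a b p :: real assumes "0 \<le> p"
  shows "\<bar>a + b\<bar> powr p \<le> 2 powr p * (\<bar>a\<bar> powr p + \<bar>b\<bar> powr p)"
proof -
  have "\<bar>a + b\<bar> \<le> 2 * max \<bar>a\<bar> \<bar>b\<bar>" by auto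
  then have "\<bar>a + b\<bar> powr p \<le> (2 * max \<bar>a\<bar> \<bar>b\<bar>) powr p"
    by (intro powr_mono2) (use assms in auto)
  also have "\<dots> = 2 powr p * max \<bar>a\<bar> \<bar>b\<bar> powr p"
    by (simp add: powr_mult)
  also have "max \<bar>a\<bar> \<bar>b\<bar> powr p \<le> \<bar>a\<bar> powr p + \<bar>b\<bar> powr p"
    by (cases "\<bar>a\<bar> \<le> \<bar>b\<bar>") (auto simp: max_def)
  finally show ?thesis by (simp add: mult_left_mono)
qed

definition gd :: "real \<Rightarrow> ('a::euclidean_space \<Rightarrow> real) \<Rightarrow> 'a \<Rightarrow> ennreal" where
  "gd p f h = (\<integral>\<^sup>+ x. ennreal (\<bar>f (x + h) - f x\<bar> powr p) \<partial>lborel)"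

lemma gd_meas[measurable]:
  assumes [measurable]: "f \<in> borel_measurable borel"
  shows "gd p f \<in> borel_measurable borel"
  unfolding gd_def[abs_def] by measurable

lemma nn_integral_cmult_add:
  assumes "f \<in> borel_measurable M" "g \<in> borel_measurable M"
  shows "(\<integral>\<^sup>+ x. c * (f x + g x) \<partial>M) = c * ((\<integral>\<^sup>+ x. f x \<partial>M) + (\<integral>\<^sup>+ x. g x \<partial>M))"
  using assms by (simp add: nn_integral_cmult nn_integral_add)

definition Ip :: "real \<Rightarrow> ('a::euclidean_space \<Rightarrow> real) \<Rightarrow> ennreal" where
  "Ip p f = (\<integral>\<^sup>+ x. ennreal (\<bar>f x\<bar> powr p) \<partial>lborel)"

lemma gd_zero[simp]: "gd p f 0 = 0"
  by (simp add: gd_def)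

lemma gd_finite:
  assumes [measurable]: "f \<in> borel_measurable borel" and p: "0 \<le> p"
  shows "gd p f h \<le> ennreal (2 powr p) * (2 * Ip p f)"
proof -
  have "gd p f h \<le> (\<integral>\<^sup>+ x. ennreal (2 powr p) * (ennreal (\<bar>f (x + h)\<bar> powr p) + ennreal (\<bar>f x\<bar> powr p)) \<partial>lborel)"
    unfolding gd_def
  proof (intro nn_integral_mono)
    fix x
    have "\<bar>f (x + h) - f x\<bar> powr p \<le> 2 powr p * (\<bar>f (x + h)\<bar> powr p + \<bar>- f x\<bar> powr p)"
      using pow_tri[OF p, of "f (x + h)" "- f x"] by simp
    then show "ennreal (\<bar>f (x + h) - f x\<bar> powr p) \<le> ennreal (2 powr p) * (ennreal (\<bar>f (x + h)\<bar> powr p) + ennreal (\<bar>f x\<bar> powr p))"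
      by (simp add: ennreal_mult[symmetric] ennreal_plus[symmetric] del: ennreal_plus)
  qed
  also have "\<dots> = ennreal (2 powr p) * ((\<integral>\<^sup>+ x. ennreal (\<bar>f (x + h)\<bar> powr p) \<partial>lborel) + Ip p f)"
    unfolding Ip_def by (intro nn_integral_cmult_add) measurable
  also have "(\<integral>\<^sup>+ x. ennreal (\<bar>f (x + h)\<bar> powr p) \<partial>lborel) = Ip p f"
    unfolding Ip_def by (rule nn_integral_translate[where u="\<lambda>x. ennreal (\<bar>f x\<bar> powr p)"]) simp
  finally show ?thesis by (simp add: mult_2)
qed

lemma gd_tri:
  assumes [measurable]: "f \<in> borel_measurable borel" and p: "0 \<le> p"
  shows "gd p f h \<le> ennreal (2 powr p) * (gd p f u + gd p f (h + u))"
proof -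
  have "gd p f h \<le> (\<integral>\<^sup>+ x. ennreal (2 powr p) * (ennreal (\<bar>f (x + h) - f (x + h + u)\<bar> powr p) + ennreal (\<bar>f (x + (h + u)) - f x\<bar> powr p)) \<partial>lborel)"
    unfolding gd_def
  proof (intro nn_integral_mono)
    fix x
    have "\<bar>f (x + h) - f x\<bar> powr p \<le> 2 powr p * (\<bar>f (x + h) - f (x + h + u)\<bar> powr p + \<bar>f (x + (h + u)) - f x\<bar> powr p)"
      using pow_tri[OF p, of "f (x + h) - f (x + h + u)" "f (x + (h + u)) - f x"] by (simp add: add.assoc)
    then show "ennreal (\<bar>f (x + h) - f x\<bar> powr p) \<le> ennreal (2 powr p) * (ennreal (\<bar>f (x + h) - f (x + h + u)\<bar> powr p) + ennreal (\<bar>f (x + (h + u)) - f x\<bar> powr p))"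
      by (simp add: ennreal_mult[symmetric] ennreal_plus[symmetric] del: ennreal_plus)
  qed
  also have "\<dots> = ennreal (2 powr p) * ((\<integral>\<^sup>+ x. ennreal (\<bar>f (x + h) - f (x + h + u)\<bar> powr p) \<partial>lborel) + gd p f (h + u))"
    unfolding gd_def by (intro nn_integral_cmult_add) measurable
  also have "(\<integral>\<^sup>+ x. ennreal (\<bar>f (x + h) - f (x + h + u)\<bar> powr p) \<partial>lborel) = gd p f u"
  proof -
    have "(\<integral>\<^sup>+ x. ennreal (\<bar>f (x + h) - f (x + h + u)\<bar> powr p) \<partial>lborel)
        = (\<integral>\<^sup>+ x. ennreal (\<bar>f x - f (x + u)\<bar> powr p) \<partial>lborel)"
      by (rule nn_integral_translate[where u="\<lambda>x. ennreal (\<bar>f x - f (x + u)\<bar> powr p)"]) simp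
    also have "\<dots> = gd p f u" unfolding gd_def by (simp add: abs_minus_commute)
    finally show ?thesis .
  qed
  finally show ?thesis .
qed

lemma exists_K:
  fixes \<rho> :: "'a::euclidean_space \<Rightarrow> real"
  assumes int: "integrable lebesgue \<rho>" and nn: "AE h in lebesgue. 0 \<le> \<rho> h"
    and one: "integral\<^sup>L lebesgue \<rho> = 1"
  obtains K :: "'a set" and \<delta> b d m :: real where "compact K" "K \<subseteq> cball 0 b" "0 < \<delta>"
    "\<And>u. u \<in> K \<Longrightarrow> \<delta> \<le> \<rho> u" "0 < d" "0 < m"
    "\<And>w. norm w < d \<Longrightarrow> ennreal m \<le> emeasure lebesgue {v\<in>K. v + w \<in> K}"
proof -
  have meas[measurable]: "\<rho> \<in> borel_measurable lebesgue" using int by auto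
  define S where "S n = {u. 1 / real (Suc n) \<le> \<rho> u} \<inter> cball 0 (real n)" for n :: nat
  have Ssets: "S n \<in> sets lebesgue" for n
  proof -
    have "{u \<in> space lebesgue. 1 / real (Suc n) \<le> \<rho> u} \<in> sets lebesgue" by measurable
    moreover have "cball 0 (real n) \<in> sets lebesgue" by simp
    ultimately show ?thesis unfolding S_def by auto
  qed
  have "\<exists>n. emeasure lebesgue (S n) \<noteq> 0"
  proof (rule ccontr)
    assume "\<not> ?thesis"
    then have null: "S n \<in> null_sets lebesgue" for n using Ssets by (auto simp: null_sets_def)
    have sub: "{u \<in> space lebesgue. \<not> \<rho> u \<le> 0} \<subseteq> (\<Union>n. S n)"
    proof
      fix u assume "u \<in> {u \<in> space lebesgue. \<not> \<rho> u \<le> 0}"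
      then have pos: "0 < \<rho> u" by simp
      obtain n1 :: nat where n1: "norm u \<le> real n1" using real_arch_simple by blast
      obtain n2 :: nat where n2: "1 / \<rho> u \<le> real n2" using real_arch_simple by blast
      define n where "n = max n1 n2"
      have "norm u \<le> real n" using n1 by (simp add: n_def)
      moreover have "1 / \<rho> u \<le> real n" using n2 by (simp add: n_def)
      then have "1 \<le> real n * \<rho> u" using pos by (simp add: field_simps)
      then have "1 \<le> real (Suc n) * \<rho> u" using pos by (simp add: distrib_right)
      then have "1 / real (Suc n) \<le> \<rho> u" by (simp add: field_simps)
      ultimately show "u \<in> (\<Union>n. S n)" by (auto simp: S_def)
    qed
    have "AE u in lebesgue. \<rho> u \<le> 0"
      by (rule AE_I'[OF _ sub]) (use null in auto)
    with nn have ae0: "AE u in lebesgue. \<rho> u = 0" by eventually_elim auto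
    have "integral\<^sup>L lebesgue \<rho> = 0"
      by (rule integral_eq_zero_AE[OF ae0])
    with one show False by simp
  qed
  then obtain n where nz: "emeasure lebesgue (S n) \<noteq> 0" by blast
  have Sb: "S n \<subseteq> cball 0 (real n)" by (auto simp: S_def)
  have Sf: "S n \<in> lmeasurable"
    by (rule bounded_set_imp_lmeasurable[OF bounded_subset[OF bounded_cball Sb] Ssets])
  define \<mu> where "\<mu> = measure lebesgue (S n)"
  have "emeasure lebesgue (S n) = ennreal \<mu>" using Sf by (simp add: \<mu>_def emeasure_eq_measure2)
  with nz have "\<mu> \<noteq> 0" by auto
  moreover have "0 \<le> \<mu>" unfolding \<mu>_def by (rule measure_nonneg)
  ultimately have \<mu>pos: "0 < \<mu>" by simp
  obtain C where C: "closed C" "C \<subseteq> S n" "S n - C \<in> lmeasurable" "emeasure lebesgue (S n - C) < ennreal (\<mu>/4)"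
    using sets_lebesgue_inner_closed[OF Ssets, of "\<mu>/4"] \<mu>pos by auto
  obtain U where U: "open U" "S n \<subseteq> U" "U - S n \<in> lmeasurable" "emeasure lebesgue (U - S n) < ennreal (\<mu>/4)"
    using sets_lebesgue_outer_open[OF Ssets, of "\<mu>/4"] \<mu>pos by auto
  have Cc: "compact C" using C(1,2) Sb
    by (meson bounded_cball bounded_subset compact_eq_bounded_closed order_trans)
  have Cf: "C \<in> lmeasurable" by (rule lmeasurable_compact[OF Cc])
  have "measure lebesgue (S n - C) < \<mu>/4"
    using C(3,4) \<mu>pos by (simp add: emeasure_eq_measure2 ennreal_less_iff)
  moreover have "measure lebesgue (S n - C) = \<mu> - measure lebesgue C"
    unfolding \<mu>_def using Sf Cf C(2) by (intro measure_Diff) (auto simp: fmeasurable_def)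
  ultimately have mC: "measure lebesgue C > 3 * \<mu> / 4" by simp
  have USeq: "U = S n \<union> (U - S n)" using U(2) by auto
  have Uf: "U \<in> lmeasurable" using Sf U(3) by (subst USeq) (rule fmeasurable.Un)
  have "measure lebesgue (U - S n) < \<mu>/4"
    using U(3,4) \<mu>pos by (simp add: emeasure_eq_measure2 ennreal_less_iff)
  moreover have "measure lebesgue U \<le> \<mu> + measure lebesgue (U - S n)"
    unfolding \<mu>_def using Sf U(3) by (subst USeq) (intro measure_Un_le; auto simp: fmeasurable_def)
  ultimately have mU: "measure lebesgue U < 5 * \<mu> / 4" by simp
  have disj: "C \<inter> - U = {}" using C(2) U(2) by auto
  obtain d where d: "d > 0" "\<And>x y. x \<in> C \<Longrightarrow> y \<in> - U \<Longrightarrow> d \<le> dist x y"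
    using separate_compact_closed[OF Cc _ disj] U(1) by (auto simp: closed_Compl)
  show thesis
  proof (rule that[of C "real n" "1 / real (Suc n)" d "\<mu>/4"])
    show "compact C" by (rule Cc)
    show "C \<subseteq> cball 0 (real n)" using C(2) Sb by auto
    show "0 < 1 / real (Suc n)" by simp
    show "\<And>u. u \<in> C \<Longrightarrow> 1 / real (Suc n) \<le> \<rho> u" using C(2) by (auto simp: S_def)
    show "0 < d" by (rule d(1))
    show "0 < \<mu>/4" using \<mu>pos by simp
    fix w :: 'a assume w: "norm w < d"
    define C' where "C' = (\<lambda>x. x - w) ` C"
    have eq: "{v\<in>C. v + w \<in> C} = C \<inter> C'"
      by (auto simp: C'_def image_iff) (metis add_diff_cancel)
    have C'U: "C' \<subseteq> U"
    proof
      fix v assume "v \<in> C'"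
      then have vC: "v + w \<in> C" by (auto simp: C'_def)
      show "v \<in> U"
      proof (rule ccontr)
        assume "v \<notin> U"
        then have "d \<le> dist (v + w) v" using d(2)[OF vC] by auto
        then show False using w by (simp add: dist_norm)
      qed
    qed
    have C'f: "C' \<in> lmeasurable" unfolding C'_def by (rule measurable_translation_subtract[OF Cf])
    have mC': "measure lebesgue C' = measure lebesgue C"
      unfolding C'_def by (rule measure_translation_subtract)
    have "measure lebesgue (C \<union> C') \<le> measure lebesgue U"
      using C(2) U(2) C'U Cf C'f Uf by (intro measure_mono_fmeasurable) (auto simp: fmeasurable_def)
    moreover have "measure lebesgue (C \<union> C') = measure lebesgue C + measure lebesgue C' - measure lebesgue (C \<inter> C')"
      by (rule measure_Un3[OF Cf C'f])
    ultimately have "\<mu>/4 \<le> measure lebesgue (C \<inter> C')" using mC mU mC' by simp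
    moreover have "emeasure lebesgue (C \<inter> C') = ennreal (measure lebesgue (C \<inter> C'))"
      using Cf C'f by (intro emeasure_eq_measure2) auto
    ultimately show "ennreal (\<mu>/4) \<le> emeasure lebesgue {v\<in>C. v + w \<in> C}"
      unfolding eq by (simp add: ennreal_leI)
  qed
qed

lemma main_est:
  fixes \<rho> :: "'a::euclidean_space \<Rightarrow> real" and f :: "'a \<Rightarrow> real"
  assumes f[measurable]: "f \<in> borel_measurable borel"
    and p: "1 \<le> p" and s: "0 < s"
    and K: "compact K" "K \<subseteq> cball 0 b" "0 < b" "0 < \<delta>" "\<And>u. u \<in> K \<Longrightarrow> \<delta> \<le> \<rho> u"
    and Kd: "\<And>w. norm w < d \<Longrightarrow> ennreal m \<le> emeasure lebesgue {v\<in>K. v + w \<in> K}"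
    and eps: "0 < \<epsilon>" and h: "norm h < \<epsilon> * d"
  shows "gd p f h * ennreal (\<epsilon> ^ DIM('a) * m)
     \<le> ennreal (2 powr p * 2 * (\<epsilon> ^ DIM('a) * (\<epsilon> * b) powr (s * p) / \<delta>)) * moll_energy (rescale \<rho>) s p f \<epsilon>"
proof -
  define n where "n = DIM('a)"
  define EK where "EK = (\<lambda>v. \<epsilon> *\<^sub>R v) ` K"
  have EKc: "compact EK" unfolding EK_def using compact_scaling[OF K(1)] by simp
  have EKb[measurable]: "EK \<in> sets borel" using EKc by (simp add: compact_imp_closed)
  define T where "T = {y. y \<in> EK \<and> y + h \<in> EK}"
  have Tb[measurable]: "T \<in> sets borel"
  proof -
    have "{y \<in> space borel. y \<in> EK \<and> y + h \<in> EK} \<in> sets borel" by measurable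
    then show ?thesis by (simp add: T_def)
  qed
  have Tl: "T \<in> sets lebesgue" using Tb by simp
  \<comment> \<open>(1) measure of T\<close>
  have Teq: "T = (\<lambda>v. \<epsilon> *\<^sub>R v + 0) ` {v\<in>K. v + (1/\<epsilon>) *\<^sub>R h \<in> K}"
  proof (intro set_eqI iffI)
    fix y assume "y \<in> T"
    then obtain v v' where v: "v \<in> K" "y = \<epsilon> *\<^sub>R v" "v' \<in> K" "y + h = \<epsilon> *\<^sub>R v'"
      by (auto simp: T_def EK_def)
    have "v + (1/\<epsilon>) *\<^sub>R h = v'"
    proof -
      have "(1/\<epsilon>) *\<^sub>R (y + h) = v'" using v(4) eps by simp
      then show ?thesis using v(2) eps by (simp add: scaleR_add_right)
    qed
    then show "y \<in> (\<lambda>v. \<epsilon> *\<^sub>R v + 0) ` {v\<in>K. v + (1/\<epsilon>) *\<^sub>R h \<in> K}"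
      using v by auto
  next
    fix y assume "y \<in> (\<lambda>v. \<epsilon> *\<^sub>R v + 0) ` {v\<in>K. v + (1/\<epsilon>) *\<^sub>R h \<in> K}"
    then obtain v where v: "v \<in> K" "v + (1/\<epsilon>) *\<^sub>R h \<in> K" "y = \<epsilon> *\<^sub>R v" by auto
    have "y + h = \<epsilon> *\<^sub>R (v + (1/\<epsilon>) *\<^sub>R h)" using v(3) eps by (simp add: scaleR_add_right)
    then show "y \<in> T" using v unfolding T_def EK_def by auto
  qed
  have "norm ((1/\<epsilon>) *\<^sub>R h) < d"
    using h eps by (simp add: field_simps)
  then have mK: "ennreal m \<le> emeasure lebesgue {v\<in>K. v + (1/\<epsilon>) *\<^sub>R h \<in> K}" by (rule Kd)
  have mT: "ennreal (\<epsilon> ^ n * m) \<le> emeasure lebesgue T"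
  proof -
    have "emeasure lebesgue T = ennreal (\<bar>\<epsilon>\<bar> ^ n) * emeasure lebesgue {v\<in>K. v + (1/\<epsilon>) *\<^sub>R h \<in> K}"
      unfolding Teq n_def by (rule emeasure_lebesgue_affine)
    also have "\<dots> \<ge> ennreal (\<epsilon> ^ n) * ennreal m"
      using eps mK by (simp add: abs_of_pos mult_left_mono)
    finally show ?thesis using eps by (simp add: ennreal_mult')
  qed
  \<comment> \<open>(2) averaging\<close>
  define J where "J = (\<integral>\<^sup>+ y. indicator EK y * gd p f y \<partial>lborel)"
  have p0: "0 \<le> p" using p by simp
  have "gd p f h * emeasure lebesgue T = (\<integral>\<^sup>+ y. gd p f h * indicator T y \<partial>lebesgue)"
    using Tl by (simp add: nn_integral_cmult_indicator)
  also have "\<dots> = (\<integral>\<^sup>+ y. gd p f h * indicator T y \<partial>lborel)"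
    by (simp add: nn_integral_completion)
  also have "\<dots> \<le> (\<integral>\<^sup>+ y. ennreal (2 powr p) * (indicator EK y * gd p f y + indicator EK (y + h) * gd p f (y + h)) \<partial>lborel)"
  proof (intro nn_integral_mono)
    fix y
    show "gd p f h * indicator T y \<le> ennreal (2 powr p) * (indicator EK y * gd p f y + indicator EK (y + h) * gd p f (y + h))"
    proof (cases "y \<in> T")
      case True
      then have "y \<in> EK" "y + h \<in> EK" by (auto simp: T_def)
      then show ?thesis using True gd_tri[OF f p0, of h y] by (simp add: add.commute)
    qed simp
  qed
  also have "\<dots> = ennreal (2 powr p) * (J + (\<integral>\<^sup>+ y. indicator EK (y + h) * gd p f (y + h) \<partial>lborel))"
    unfolding J_def by (intro nn_integral_cmult_add) measurable
  also have "(\<integral>\<^sup>+ y. indicator EK (y + h) * gd p f (y + h) \<partial>lborel) = J"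
    unfolding J_def by (rule nn_integral_translate[where u="\<lambda>y. indicator EK y * gd p f y"]) measurable
  finally have avg: "gd p f h * emeasure lebesgue T \<le> ennreal (2 powr p) * (J + J)" .
  \<comment> \<open>(3) lower bound for the energy\<close>
  define c' where "c' = \<delta> / (\<epsilon> ^ n * (\<epsilon> * b) powr (s * p))"
  have c'pos: "0 < c'" unfolding c'_def using K eps by simp
  have "ennreal c' * J = (\<integral>\<^sup>+ y. ennreal c' * (indicator EK y * gd p f y) \<partial>lborel)"
    unfolding J_def by (rule nn_integral_cmult[symmetric]) measurable
  also have "\<dots> \<le> (\<integral>\<^sup>+ y. (\<integral>\<^sup>+ x. ennreal (rescale \<rho> \<epsilon> y * \<bar>f (x + y) - f x\<bar> powr p / norm y powr (s * p)) \<partial>lborel) \<partial>lborel)"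
  proof (intro nn_integral_mono)
    fix y
    show "ennreal c' * (indicator EK y * gd p f y) \<le> (\<integral>\<^sup>+ x. ennreal (rescale \<rho> \<epsilon> y * \<bar>f (x + y) - f x\<bar> powr p / norm y powr (s * p)) \<partial>lborel)"
    proof (cases "y \<in> EK \<and> y \<noteq> 0")
      case False
      then show ?thesis by (auto simp: indicator_def)
    next
      case True
      then obtain v where v: "v \<in> K" "y = \<epsilon> *\<^sub>R v" unfolding EK_def by auto
      have rv: "\<delta> \<le> \<rho> v" by (rule K(5)[OF v(1)])
      have resc: "rescale \<rho> \<epsilon> y = \<rho> v / \<epsilon> ^ n"
        unfolding rescale_def n_def using v(2) eps by (simp add: field_simps)
      have ny: "norm y \<le> \<epsilon> * b" using v K(2) eps by (auto simp: mult_left_mono)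
      have ny0: "0 < norm y" using True by simp
      have spp: "0 < s * p" using s p by simp
      have "norm y powr (s * p) \<le> (\<epsilon> * b) powr (s * p)"
        using ny spp by (intro powr_mono2) auto
      then have inv: "1 / (\<epsilon> * b) powr (s * p) \<le> 1 / norm y powr (s * p)"
        using ny0 eps K(3) by (intro divide_left_mono) auto
      have dle: "\<delta> / \<epsilon> ^ n \<le> \<rho> v / \<epsilon> ^ n" using rv eps by (simp add: divide_right_mono)
      have key: "c' \<le> rescale \<rho> \<epsilon> y / norm y powr (s * p)"
      proof -
        have "c' = (\<delta> / \<epsilon> ^ n) * (1 / (\<epsilon> * b) powr (s * p))" unfolding c'_def by simp
        also have "\<dots> \<le> (\<rho> v / \<epsilon> ^ n) * (1 / norm y powr (s * p))"
          using dle inv K(4) eps rv by (intro mult_mono) auto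
        finally show ?thesis using resc by simp
      qed
      have "ennreal c' * (indicator EK y * gd p f y) = ennreal c' * gd p f y"
        using True by simp
      also have "\<dots> = (\<integral>\<^sup>+ x. ennreal c' * ennreal (\<bar>f (x + y) - f x\<bar> powr p) \<partial>lborel)"
        unfolding gd_def by (rule nn_integral_cmult[symmetric]) measurable
      also have "\<dots> \<le> (\<integral>\<^sup>+ x. ennreal (rescale \<rho> \<epsilon> y * \<bar>f (x + y) - f x\<bar> powr p / norm y powr (s * p)) \<partial>lborel)"
      proof (intro nn_integral_mono)
        fix x
        have "c' * \<bar>f (x + y) - f x\<bar> powr p \<le> (rescale \<rho> \<epsilon> y / norm y powr (s * p)) * \<bar>f (x + y) - f x\<bar> powr p"
          using key by (intro mult_right_mono) auto
        then show "ennreal c' * ennreal (\<bar>f (x + y) - f x\<bar> powr p) \<le> ennreal (rescale \<rho> \<epsilon> y * \<bar>f (x + y) - f x\<bar> powr p / norm y powr (s * p))"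
          using c'pos by (simp add: ennreal_mult[symmetric] ennreal_leI)
      qed
      finally show ?thesis .
    qed
  qed
  also have "\<dots> = moll_energy (rescale \<rho>) s p f \<epsilon>"
    unfolding moll_energy_def by (simp add: nn_integral_completion)
  finally have lowE: "ennreal c' * J \<le> moll_energy (rescale \<rho>) s p f \<epsilon>" .
  \<comment> \<open>combine\<close>
  have "gd p f h * ennreal (\<epsilon> ^ DIM('a) * m) \<le> ennreal (2 powr p) * (J + J)"
    using mT avg unfolding n_def by (meson mult_left_mono order_trans zero_le)
  also have "\<dots> = ennreal (2 powr p * 2) * J"
    by (simp add: mult_2[symmetric] ennreal_mult' mult.assoc)
  also have "J = ennreal (1 / c') * (ennreal c' * J)"
    using c'pos by (simp add: ennreal_mult'[symmetric] mult.assoc[symmetric])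
  also have "ennreal (2 powr p * 2) * (ennreal (1 / c') * (ennreal c' * J))
      \<le> ennreal (2 powr p * 2) * (ennreal (1 / c') * moll_energy (rescale \<rho>) s p f \<epsilon>)"
    by (intro mult_left_mono lowE) auto
  also have "\<dots> = ennreal (2 powr p * 2 * (\<epsilon> ^ DIM('a) * (\<epsilon> * b) powr (s * p) / \<delta>)) * moll_energy (rescale \<rho>) s p f \<epsilon>"
    using c'pos unfolding c'_def n_def by (simp add: ennreal_mult'[symmetric] mult.assoc[symmetric])
  finally show ?thesis .
qed

lemma gd_fin:
  assumes "f \<in> borel_measurable borel" "1 \<le> p" "Ip p f < \<infinity>"
  shows "gd p f h = ennreal (enn2real (gd p f h))" "enn2real (gd p f h) \<le> 2 powr p * 2 * enn2real (Ip p f)"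
proof -
  have le: "gd p f h \<le> ennreal (2 powr p) * (2 * Ip p f)" using gd_finite[of f p h] assms by simp
  have Ipe: "Ip p f = ennreal (enn2real (Ip p f))" using assms(3) by (simp add: ennreal_enn2real_if)
  have "ennreal (2 powr p) * (2 * Ip p f) = ennreal (2 powr p * 2 * enn2real (Ip p f))"
    by (subst Ipe) (simp add: mult.assoc ennreal_mult)
  with le have le2: "gd p f h \<le> ennreal (2 powr p * 2 * enn2real (Ip p f))" by simp
  then have "gd p f h < \<infinity>" using le_less_trans by fastforce
  then show "gd p f h = ennreal (enn2real (gd p f h))" by (simp add: ennreal_enn2real_if)
  then show "enn2real (gd p f h) \<le> 2 powr p * 2 * enn2real (Ip p f)"
  proof -
    have "enn2real (gd p f h) \<le> enn2real (ennreal (2 powr p * 2 * enn2real (Ip p f)))"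
      by (rule enn2real_mono[OF le2]) simp
    then show ?thesis by simp
  qed
qed

lemma bound:
  fixes \<rho> :: "'a::euclidean_space \<Rightarrow> real" and f :: "'a \<Rightarrow> real"
  assumes f[measurable]: "f \<in> borel_measurable borel" and fin: "Ip p f < \<infinity>"
    and p: "1 \<le> p" and s: "0 < s"
    and K: "compact K" "K \<subseteq> cball 0 b" "0 < b" "0 < \<delta>" "\<And>u. u \<in> K \<Longrightarrow> \<delta> \<le> \<rho> u"
    and Kd: "\<And>w. norm w < d \<Longrightarrow> ennreal m \<le> emeasure lebesgue {v\<in>K. v + w \<in> K}"
    and dm: "0 < d" "0 < m"
    and e0: "0 < \<epsilon>0" and M: "0 \<le> M"
    and EM: "\<And>\<epsilon>. 0 < \<epsilon> \<Longrightarrow> \<epsilon> < \<epsilon>0 \<Longrightarrow> moll_energy (rescale \<rho>) s p f \<epsilon> \<le> ennreal M"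
    and h: "h \<noteq> 0"
  shows "enn2real (gd p f h) / norm h powr (s * p)
    \<le> (2 powr p * 2 * b powr (s * p) * (2 / d) powr (s * p) / (\<delta> * m)) * M
      + (2 powr p * 2 / (\<epsilon>0 * d / 2) powr (s * p)) * enn2real (Ip p f)"
proof -
  define G where "G = enn2real (gd p f h)"
  define I where "I = enn2real (Ip p f)"
  define q where "q = s * p"
  have q: "0 < q" using s p by (simp add: q_def)
  have G0: "0 \<le> G" by (simp add: G_def)
  have I0: "0 \<le> I" by (simp add: I_def)
  have Ge: "gd p f h = ennreal G" unfolding G_def using gd_fin[OF f p fin] by simp
  have GI: "G \<le> 2 powr p * 2 * I" unfolding G_def I_def using gd_fin[OF f p fin] by simp
  have nh: "0 < norm h" using h by simp
  have nhq: "0 < norm h powr q" using nh by simp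
  define C1 where "C1 = 2 powr p * 2 * b powr q * (2 / d) powr q / (\<delta> * m)"
  define C2 where "C2 = 2 powr p * 2 / (\<epsilon>0 * d / 2) powr q"
  have C10: "0 \<le> C1" unfolding C1_def using K dm by simp
  have C20: "0 \<le> C2" unfolding C2_def by simp
  have "G / norm h powr q \<le> C1 * M + C2 * I"
  proof (cases "norm h < \<epsilon>0 * d / 2")
    case True
    define \<epsilon> where "\<epsilon> = 2 * norm h / d"
    have eps: "0 < \<epsilon>" "\<epsilon> < \<epsilon>0" using True nh dm by (auto simp: \<epsilon>_def field_simps)
    have hd: "norm h < \<epsilon> * d" using nh dm by (simp add: \<epsilon>_def)
    define N where "N = DIM('a)"
    define Ke where "Ke = 2 powr p * 2 * (\<epsilon> ^ N * (\<epsilon> * b) powr q / \<delta>)"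
    have Ke0: "0 \<le> Ke" unfolding Ke_def using K eps by simp
    have "ennreal (G * (\<epsilon> ^ N * m)) = gd p f h * ennreal (\<epsilon> ^ N * m)"
      using G0 eps dm by (simp add: Ge ennreal_mult)
    also have "\<dots> \<le> ennreal Ke * moll_energy (rescale \<rho>) s p f \<epsilon>"
      using main_est[OF f p s K Kd eps(1) hd] unfolding Ke_def N_def q_def .
    also have "\<dots> \<le> ennreal Ke * ennreal M"
      by (intro mult_left_mono EM eps) auto
    also have "\<dots> = ennreal (Ke * M)" using Ke0 M by (simp add: ennreal_mult)
    finally have "G * (\<epsilon> ^ N * m) \<le> Ke * M"
      using Ke0 M by (simp add: ennreal_le_iff)
    then have "G * m * \<epsilon> ^ N \<le> (2 powr p * 2 * (\<epsilon> * b) powr q / \<delta> * M) * \<epsilon> ^ N"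
      unfolding Ke_def by (simp add: field_simps)
    then have "G * m \<le> 2 powr p * 2 * (\<epsilon> * b) powr q / \<delta> * M"
      using mult_right_le_imp_le eps by (metis zero_less_power)
    then have G1: "G \<le> 2 powr p * 2 * (\<epsilon> * b) powr q / (\<delta> * m) * M"
      using dm K by (simp add: field_simps)
    have "(\<epsilon> * b) powr q = (2 / d) powr q * norm h powr q * b powr q"
      using dm K nh by (simp add: \<epsilon>_def powr_mult[symmetric] mult.commute mult.left_commute)
    with G1 have "G \<le> C1 * M * norm h powr q"
      unfolding C1_def by (simp add: field_simps)
    then have "G / norm h powr q \<le> C1 * M" using nhq by (simp add: divide_le_eq)
    then show ?thesis using C20 I0 by (smt (verit) mult_nonneg_nonneg)
  next
    case False
    then have "(\<epsilon>0 * d / 2) powr q \<le> norm h powr q"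
      using e0 dm q by (intro powr_mono2) auto
    moreover have pos: "0 < (\<epsilon>0 * d / 2) powr q" using e0 dm by simp
    ultimately have "G / norm h powr q \<le> G / (\<epsilon>0 * d / 2) powr q"
      using G0 nh e0 dm by (intro divide_left_mono) auto
    also have "\<dots> \<le> (2 powr p * 2 * I) / (\<epsilon>0 * d / 2) powr q"
      using GI pos by (intro divide_right_mono) auto
    also have "\<dots> = C2 * I" unfolding C2_def by simp
    finally show ?thesis using C10 M by (smt (verit) mult_nonneg_nonneg)
  qed
  then show ?thesis unfolding G_def I_def C1_def C2_def q_def .
qed

lemma energy_upper:
  fixes \<rho> :: "'a::euclidean_space \<Rightarrow> real" and f :: "'a \<Rightarrow> real"
  assumes f[measurable]: "f \<in> borel_measurable borel" and fin: "Ip p f < \<infinity>"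
    and p: "1 \<le> p" and s: "0 < s"
    and mi: "integrable lebesgue (rescale \<rho> \<epsilon>)" and mn: "AE h in lebesgue. 0 \<le> rescale \<rho> \<epsilon> h"
    and m1: "integral\<^sup>L lebesgue (rescale \<rho> \<epsilon>) = 1"
    and B: "0 \<le> B" "\<And>h. h \<noteq> 0 \<Longrightarrow> enn2real (gd p f h) \<le> B * norm h powr (s * p)"
  shows "moll_energy (rescale \<rho>) s p f \<epsilon> \<le> ennreal B"
proof -
  have rm[measurable]: "rescale \<rho> \<epsilon> \<in> borel_measurable lebesgue" using mi by auto
  have "moll_energy (rescale \<rho>) s p f \<epsilon>
      = (\<integral>\<^sup>+ y. (\<integral>\<^sup>+ x. ennreal (rescale \<rho> \<epsilon> y * \<bar>f (x + y) - f x\<bar> powr p / norm y powr (s * p)) \<partial>lborel) \<partial>lebesgue)"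
    unfolding moll_energy_def by (simp add: nn_integral_completion)
  also have "\<dots> \<le> (\<integral>\<^sup>+ y. ennreal B * ennreal (rescale \<rho> \<epsilon> y) \<partial>lebesgue)"
  proof (rule nn_integral_mono_AE)
    show "AE y in lebesgue. (\<integral>\<^sup>+ x. ennreal (rescale \<rho> \<epsilon> y * \<bar>f (x + y) - f x\<bar> powr p / norm y powr (s * p)) \<partial>lborel)
        \<le> ennreal B * ennreal (rescale \<rho> \<epsilon> y)"
      using mn
    proof eventually_elim
      fix y assume r0: "0 \<le> rescale \<rho> \<epsilon> y"
      define r where "r = rescale \<rho> \<epsilon> y"
      show "(\<integral>\<^sup>+ x. ennreal (rescale \<rho> \<epsilon> y * \<bar>f (x + y) - f x\<bar> powr p / norm y powr (s * p)) \<partial>lborel)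
        \<le> ennreal B * ennreal (rescale \<rho> \<epsilon> y)"
      proof (cases "y = 0")
        case True then show ?thesis by simp
      next
        case False
        have ny: "0 < norm y powr (s * p)" using False by simp
        have "(\<integral>\<^sup>+ x. ennreal (rescale \<rho> \<epsilon> y * \<bar>f (x + y) - f x\<bar> powr p / norm y powr (s * p)) \<partial>lborel)
            = (\<integral>\<^sup>+ x. ennreal (r / norm y powr (s * p)) * ennreal (\<bar>f (x + y) - f x\<bar> powr p) \<partial>lborel)"
          using r0 ny by (intro nn_integral_cong) (simp add: r_def ennreal_mult[symmetric])
        also have "\<dots> = ennreal (r / norm y powr (s * p)) * gd p f y"
          unfolding gd_def by (rule nn_integral_cmult) measurable
        also have "\<dots> = ennreal (r / norm y powr (s * p) * enn2real (gd p f y))"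
          using gd_fin(1)[OF f p fin, of y] r0 ny
          by (metis divide_nonneg_pos enn2real_nonneg ennreal_mult r_def)
        also have "\<dots> \<le> ennreal (r * B)"
        proof (intro ennreal_leI)
          have "r / norm y powr (s * p) * enn2real (gd p f y) \<le> r / norm y powr (s * p) * (B * norm y powr (s * p))"
            using B(2)[OF False] r0 ny by (intro mult_left_mono) (auto simp: r_def)
          also have "\<dots> = r * B" using ny by simp
          finally show "r / norm y powr (s * p) * enn2real (gd p f y) \<le> r * B" .
        qed
        also have "\<dots> = ennreal B * ennreal (rescale \<rho> \<epsilon> y)"
          using r0 B(1) by (simp add: r_def ennreal_mult mult.commute)
        finally show ?thesis .
      qed
    qed
  qed
  also have "\<dots> = ennreal B * (\<integral>\<^sup>+ y. ennreal (rescale \<rho> \<epsilon> y) \<partial>lebesgue)"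
    by (rule nn_integral_cmult) measurable
  also have "(\<integral>\<^sup>+ y. ennreal (rescale \<rho> \<epsilon> y) \<partial>lebesgue) = 1"
    using nn_integral_eq_integral[OF mi mn] m1 by simp
  finally show ?thesis by simp
qed

lemma sum_powr_le:
  fixes a b p :: real assumes "0 \<le> a" "0 \<le> b" "1 \<le> p"
  shows "a powr p + b powr p \<le> (a + b) powr p"
proof (cases "a + b = 0")
  case True then have "a = 0" "b = 0" using assms by auto
  then show ?thesis by simp
next
  case False
  then have ab: "0 < a + b" using assms by simp
  have le: "x powr p \<le> x" if "0 \<le> x" "x \<le> 1" for x :: real
  proof (cases "x = 0")
    case True then show ?thesis by simp
  next
    case False
    then have "x powr p \<le> x powr 1" using that assms by (intro powr_mono') auto
    then show ?thesis using that by simp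
  qed
  have "a powr p = (a + b) powr p * (a / (a + b)) powr p"
    using ab assms by (simp add: powr_divide)
  also have "\<dots> \<le> (a + b) powr p * (a / (a + b))"
    using ab assms by (intro mult_left_mono le) auto
  finally have A: "a powr p \<le> (a + b) powr p * (a / (a + b))" .
  have "b powr p = (a + b) powr p * (b / (a + b)) powr p"
    using ab assms by (simp add: powr_divide)
  also have "\<dots> \<le> (a + b) powr p * (b / (a + b))"
    using ab assms by (intro mult_left_mono le) auto
  finally have B: "b powr p \<le> (a + b) powr p * (b / (a + b))" .
  have "(a + b) powr p * (a / (a + b)) + (a + b) powr p * (b / (a + b)) = (a + b) powr p"
    using ab by (simp add: add_divide_distrib[symmetric] distrib_left[symmetric])
  with A B show ?thesis by linarith
qed

lemma Lp_norm_eq: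
  assumes "Ip p f < \<infinity>"
  shows "Lp_norm p f = ennreal (enn2real (Ip p f) powr (1 / p))"
  using assms unfolding Lp_norm_def epow_def Ip_def by (simp add: nn_integral_completion)

lemma Lp_norm_shift_eq:
  assumes "gd p f h < \<infinity>"
  shows "Lp_norm p (\<lambda>x. f (x + h) - f x) = ennreal (enn2real (gd p f h) powr (1 / p))"
  using assms unfolding Lp_norm_def epow_def gd_def by (simp add: nn_integral_completion)

lemma besov_eq:
  assumes f: "f \<in> borel_measurable borel" and p: "1 \<le> p" and fin: "Ip p f < \<infinity>"
  shows "besov_seminorm s p f = (SUP h\<in>UNIV - {0}. ennreal (enn2real (gd p f h) powr (1 / p) / norm h powr s))"
  unfolding besov_seminorm_def
proof (intro SUP_cong refl)
  fix h :: 'a assume "h \<in> UNIV - {0}"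
  then have h: "0 < norm h powr s" by simp
  have "gd p f h < \<infinity>" by (subst gd_fin(1)[OF f p fin, of h]) simp
  then show "Lp_norm p (\<lambda>x. f (x + h) - f x) / ennreal (norm h powr s)
      = ennreal (enn2real (gd p f h) powr (1 / p) / norm h powr s)"
    using h by (simp add: Lp_norm_shift_eq divide_ennreal)
qed

lemma besov_le_R:
  assumes f: "f \<in> borel_measurable borel" and p: "1 \<le> p" and s: "0 < s" and fin: "Ip p f < \<infinity>"
    and R: "0 \<le> R" "\<And>h. h \<noteq> 0 \<Longrightarrow> enn2real (gd p f h) / norm h powr (s * p) \<le> R"
  shows "besov_seminorm s p f \<le> ennreal (R powr (1 / p))"
  unfolding besov_eq[OF f p fin]
proof (intro SUP_least ennreal_leI)
  fix h :: 'a assume "h \<in> UNIV - {0}"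
  then have h0: "h \<noteq> 0" by simp
  define G where "G = enn2real (gd p f h)"
  have G0: "0 \<le> G" by (simp add: G_def)
  have nh: "0 < norm h" using h0 by simp
  have "G powr (1 / p) / norm h powr s = (G / norm h powr (s * p)) powr (1 / p)"
    using G0 nh p by (simp add: powr_divide powr_powr)
  also have "\<dots> \<le> R powr (1 / p)"
    using R(2)[OF h0] G0 p by (intro powr_mono2) (auto simp: G_def)
  finally show "enn2real (gd p f h) powr (1 / p) / norm h powr s \<le> R powr (1 / p)" by (simp add: G_def)
qed

lemma besov_finite_bound:
  assumes f: "f \<in> borel_measurable borel" and p: "1 \<le> p" and s: "0 < s" and fin: "Ip p f < \<infinity>"
    and bt: "besov_seminorm s p f < \<infinity>" and h0: "h \<noteq> 0"
  shows "enn2real (gd p f h) \<le> enn2real (besov_seminorm s p f) powr p * norm h powr (s * p)"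
proof -
  define \<beta> where "\<beta> = enn2real (besov_seminorm s p f)"
  have \<beta>0: "0 \<le> \<beta>" by (simp add: \<beta>_def)
  have be: "besov_seminorm s p f = ennreal \<beta>" using bt by (simp add: \<beta>_def ennreal_enn2real_if)
  define G where "G = enn2real (gd p f h)"
  have G0: "0 \<le> G" by (simp add: G_def)
  have nh: "0 < norm h" using h0 by simp
  have "ennreal (G powr (1 / p) / norm h powr s) \<le> besov_seminorm s p f"
    unfolding besov_eq[OF f p fin] G_def using h0 by (intro SUP_upper) auto
  then have "G powr (1 / p) / norm h powr s \<le> \<beta>" using be \<beta>0 by (simp add: ennreal_le_iff)
  then have "G powr (1 / p) \<le> \<beta> * norm h powr s" using nh by (simp add: divide_le_eq)
  then have "(G powr (1 / p)) powr p \<le> (\<beta> * norm h powr s) powr p"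
    using G0 p by (intro powr_mono2) auto
  moreover have "(G powr (1 / p)) powr p = G" using G0 p by (simp add: powr_powr)
  moreover have "(\<beta> * norm h powr s) powr p = \<beta> powr p * norm h powr (s * p)"
    using \<beta>0 nh by (simp add: powr_mult powr_powr)
  ultimately show ?thesis by (simp add: G_def \<beta>_def)
qed

lemma epow_ennreal: "0 \<le> x \<Longrightarrow> epow (ennreal x) q = ennreal (x powr q)"
  by (simp add: epow_def)

lemma core:
  fixes \<rho> :: "'a::euclidean_space \<Rightarrow> real" and f :: "'a \<Rightarrow> real"
  assumes f[measurable]: "f \<in> borel_measurable borel" and fin: "Ip p f < \<infinity>"
    and p: "1 \<le> p" and s: "0 < s"
    and K: "compact K" "K \<subseteq> cball 0 b" "0 < b" "0 < \<delta>" "\<And>u. u \<in> K \<Longrightarrow> \<delta> \<le> \<rho> u"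
    and Kd: "\<And>w. norm w < d \<Longrightarrow> ennreal m \<le> emeasure lebesgue {v\<in>K. v + w \<in> K}"
    and dm: "0 < d" "0 < m"
    and moll: "\<And>\<epsilon>. 0 < \<epsilon> \<Longrightarrow> integrable lebesgue (rescale \<rho> \<epsilon>) \<and> (AE h in lebesgue. 0 \<le> rescale \<rho> \<epsilon> h)
                  \<and> integral\<^sup>L lebesgue (rescale \<rho> \<epsilon>) = 1"
  defines "C1 \<equiv> 2 powr p * 2 * b powr (s * p) * (2 / d) powr (s * p) / (\<delta> * m)"
    and "C2 \<equiv> 2 powr p * 2 / (1 * d / 2) powr (s * p)"
  shows "besov_seminorm s p f < \<infinity> \<longleftrightarrow> Limsup (at_right 0) (moll_energy (rescale \<rho>) s p f) < \<infinity>"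
    and "ennreal (1 / (2 powr p * (1 + C1 + C2))) * epow (besov_norm s p f) p
          \<le> epow (Lp_norm p f) p + (SUP \<epsilon>\<in>{0<..<1}. moll_energy (rescale \<rho>) s p f \<epsilon>)"
    and "epow (Lp_norm p f) p + (SUP \<epsilon>\<in>{0<..<1}. moll_energy (rescale \<rho>) s p f \<epsilon>)
          \<le> ennreal 1 * epow (besov_norm s p f) p"
proof -
  define I where "I = enn2real (Ip p f)"
  define L where "L = I powr (1 / p)"
  define E where "E = moll_energy (rescale \<rho>) s p f"
  define S where "S = (SUP \<epsilon>\<in>{0<..<1}. E \<epsilon>)"
  have I0: "0 \<le> I" by (simp add: I_def)
  have L0: "0 \<le> L" by (simp add: L_def)
  have LpI: "L powr p = I" using I0 p by (simp add: L_def powr_powr)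
  have Lp: "Lp_norm p f = ennreal L" unfolding L_def I_def by (rule Lp_norm_eq[OF fin])
  have EL: "epow (Lp_norm p f) p = ennreal I" using Lp L0 LpI by (simp add: epow_ennreal)
  have C10: "0 \<le> C1" unfolding C1_def using K dm by simp
  have C20: "0 \<le> C2" unfolding C2_def by simp
  \<comment> \<open>upper energy bound when Besov finite\<close>
  have Eup: "E \<epsilon> \<le> ennreal (enn2real (besov_seminorm s p f) powr p)"
    if bt: "besov_seminorm s p f < \<infinity>" and e: "0 < \<epsilon>" for \<epsilon>
    unfolding E_def
    using moll[OF e] besov_finite_bound[OF f p s fin bt]
    by (intro energy_upper[OF f fin p s]) auto
  \<comment> \<open>Besov finite from energy bound\<close>
  have Blow: "besov_seminorm s p f \<le> ennreal (((2 powr p * 2 * b powr (s * p) * (2 / d) powr (s * p) / (\<delta> * m)) * M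
      + (2 powr p * 2 / (\<epsilon>0 * d / 2) powr (s * p)) * I) powr (1 / p))"
    if e0: "0 < \<epsilon>0" and M: "0 \<le> M" and EM: "\<And>\<epsilon>. 0 < \<epsilon> \<Longrightarrow> \<epsilon> < \<epsilon>0 \<Longrightarrow> E \<epsilon> \<le> ennreal M" for \<epsilon>0 M
  proof (rule besov_le_R[OF f p s fin])
    show "0 \<le> (2 powr p * 2 * b powr (s * p) * (2 / d) powr (s * p) / (\<delta> * m)) * M
      + (2 powr p * 2 / (\<epsilon>0 * d / 2) powr (s * p)) * I"
      using K dm M I0 e0 by simp
    have EM': "\<And>\<epsilon>. 0 < \<epsilon> \<Longrightarrow> \<epsilon> < \<epsilon>0 \<Longrightarrow> moll_energy (rescale \<rho>) s p f \<epsilon> \<le> ennreal M"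
      using EM by (simp add: E_def)
    fix h :: 'a assume h: "h \<noteq> 0"
    from bound[OF f fin p s K Kd dm e0 M EM' h] show "enn2real (gd p f h) / norm h powr (s * p) \<le> (2 powr p * 2 * b powr (s * p) * (2 / d) powr (s * p) / (\<delta> * m)) * M
      + (2 powr p * 2 / (\<epsilon>0 * d / 2) powr (s * p)) * I"
      by (simp add: I_def)
  qed
  \<comment> \<open>part 1\<close>
  show "besov_seminorm s p f < \<infinity> \<longleftrightarrow> Limsup (at_right 0) (moll_energy (rescale \<rho>) s p f) < \<infinity>"
    unfolding E_def[symmetric]
  proof
    assume bt: "besov_seminorm s p f < \<infinity>"
    have "eventually (\<lambda>\<epsilon>. E \<epsilon> \<le> ennreal (enn2real (besov_seminorm s p f) powr p)) (at_right (0::real))"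
      using eventually_at_right_less[of "0::real"] by eventually_elim (rule Eup[OF bt])
    then have "Limsup (at_right 0) E \<le> ennreal (enn2real (besov_seminorm s p f) powr p)"
      by (rule Limsup_bounded)
    then show "Limsup (at_right 0) E < \<infinity>" using le_less_trans by fastforce
  next
    assume lt: "Limsup (at_right 0) E < \<infinity>"
    define M where "M = enn2real (Limsup (at_right 0) E) + 1"
    have M0: "0 \<le> M" by (simp add: M_def)
    have "Limsup (at_right 0) E < ennreal M"
    proof -
      have "Limsup (at_right 0) E = ennreal (enn2real (Limsup (at_right 0) E))"
        using lt by (simp add: ennreal_enn2real_if)
      also have "\<dots> < ennreal M" unfolding M_def by (simp add: ennreal_less_iff)
      finally show ?thesis .
    qed
    then have "eventually (\<lambda>\<epsilon>. E \<epsilon> < ennreal M) (at_right (0::real))"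
      by (rule Limsup_lessD)
    then obtain \<epsilon>0 where e0: "0 < \<epsilon>0" and EM: "\<And>\<epsilon>. 0 < \<epsilon> \<Longrightarrow> \<epsilon> < \<epsilon>0 \<Longrightarrow> E \<epsilon> < ennreal M"
      unfolding eventually_at_right_field by auto
    have "besov_seminorm s p f \<le> ennreal (((2 powr p * 2 * b powr (s * p) * (2 / d) powr (s * p) / (\<delta> * m)) * M
      + (2 powr p * 2 / (\<epsilon>0 * d / 2) powr (s * p)) * I) powr (1 / p))"
      using EM by (intro Blow[OF e0 M0]) (simp add: less_imp_le)
    then show "besov_seminorm s p f < \<infinity>" using le_less_trans by fastforce
  qed
  \<comment> \<open>part 3\<close>
  show "epow (Lp_norm p f) p + (SUP \<epsilon>\<in>{0<..<1}. moll_energy (rescale \<rho>) s p f \<epsilon>)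
          \<le> ennreal 1 * epow (besov_norm s p f) p"
    unfolding E_def[symmetric]
  proof (cases "besov_seminorm s p f < \<infinity>")
    case False
    then have "besov_seminorm s p f = \<infinity>" by (simp add: less_top[symmetric])
    then show "epow (Lp_norm p f) p + (SUP \<epsilon>\<in>{0<..<1}. E \<epsilon>) \<le> ennreal 1 * epow (besov_norm s p f) p" by (simp add: besov_norm_def epow_def)
  next
    case True
    define \<beta> where "\<beta> = enn2real (besov_seminorm s p f)"
    have \<beta>0: "0 \<le> \<beta>" by (simp add: \<beta>_def)
    have be: "besov_seminorm s p f = ennreal \<beta>" using True by (simp add: \<beta>_def ennreal_enn2real_if)
    have bn: "epow (besov_norm s p f) p = ennreal ((L + \<beta>) powr p)"
      unfolding besov_norm_def Lp be using L0 \<beta>0 by (simp add: ennreal_plus[symmetric] epow_ennreal del: ennreal_plus)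
    have "(SUP \<epsilon>\<in>{0<..<1}. E \<epsilon>) \<le> ennreal (\<beta> powr p)"
      using Eup[OF True] unfolding \<beta>_def by (intro SUP_least) auto
    then have "epow (Lp_norm p f) p + (SUP \<epsilon>\<in>{0<..<1}. E \<epsilon>) \<le> ennreal I + ennreal (\<beta> powr p)"
      unfolding EL by (rule add_left_mono)
    also have "\<dots> = ennreal (L powr p + \<beta> powr p)" using I0 LpI by simp
    also have "\<dots> \<le> ennreal ((L + \<beta>) powr p)"
      using sum_powr_le[OF L0 \<beta>0 p] by (rule ennreal_leI)
    finally show "epow (Lp_norm p f) p + (SUP \<epsilon>\<in>{0<..<1}. E \<epsilon>) \<le> ennreal 1 * epow (besov_norm s p f) p" using bn by simp
  qed
  \<comment> \<open>part 2\<close>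
  show "ennreal (1 / (2 powr p * (1 + C1 + C2))) * epow (besov_norm s p f) p
          \<le> epow (Lp_norm p f) p + (SUP \<epsilon>\<in>{0<..<1}. moll_energy (rescale \<rho>) s p f \<epsilon>)"
    unfolding E_def[symmetric] S_def[symmetric]
  proof (cases "S < \<infinity>")
    case False
    then have "S = \<infinity>" by (simp add: less_top[symmetric])
    then show "ennreal (1 / (2 powr p * (1 + C1 + C2))) * epow (besov_norm s p f) p \<le> epow (Lp_norm p f) p + S" by simp
  next
    case True
    define Sr where "Sr = enn2real S"
    have Sr0: "0 \<le> Sr" by (simp add: Sr_def)
    have Se: "S = ennreal Sr" using True by (simp add: Sr_def ennreal_enn2real_if)
    have ES: "E \<epsilon> \<le> ennreal Sr" if "0 < \<epsilon>" "\<epsilon> < 1" for \<epsilon>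
      unfolding Se[symmetric] S_def using that by (intro SUP_upper) auto
    define R where "R = C1 * Sr + C2 * I"
    have R0: "0 \<le> R" unfolding R_def using C10 C20 Sr0 I0 by simp
    have bR: "besov_seminorm s p f \<le> ennreal (R powr (1 / p))"
      using Blow[of 1 Sr] ES Sr0 unfolding R_def C1_def C2_def by simp
    then have bt: "besov_seminorm s p f < \<infinity>" using le_less_trans by fastforce
    define \<beta> where "\<beta> = enn2real (besov_seminorm s p f)"
    have \<beta>0: "0 \<le> \<beta>" by (simp add: \<beta>_def)
    have be: "besov_seminorm s p f = ennreal \<beta>" using bt by (simp add: \<beta>_def ennreal_enn2real_if)
    have "\<beta> \<le> R powr (1 / p)" using bR be R0 by (simp add: ennreal_le_iff)
    then have "\<beta> powr p \<le> (R powr (1 / p)) powr p" using \<beta>0 p by (intro powr_mono2) auto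
    also have "\<dots> = R" using R0 p by (simp add: powr_powr)
    finally have \<beta>R: "\<beta> powr p \<le> R" .
    have bn: "epow (besov_norm s p f) p = ennreal ((L + \<beta>) powr p)"
      unfolding besov_norm_def Lp be using L0 \<beta>0 by (simp add: ennreal_plus[symmetric] epow_ennreal del: ennreal_plus)
    define c where "c = 1 / (2 powr p * (1 + C1 + C2))"
    have cpos: "0 < c" unfolding c_def using C10 C20 by simp
    have "(L + \<beta>) powr p \<le> 2 powr p * (L powr p + \<beta> powr p)"
      using pow_tri[of p L \<beta>] p L0 \<beta>0 by simp
    also have "\<dots> \<le> 2 powr p * (I + R)" using LpI \<beta>R by simp
    also have "\<dots> \<le> 2 powr p * ((1 + C1 + C2) * (I + Sr))"
    proof (intro mult_left_mono)
      have "(1 + C1 + C2) * (I + Sr) = I + R + (Sr + C1 * I + C2 * Sr)"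
        unfolding R_def by (simp add: algebra_simps)
      moreover have "0 \<le> C1 * I" "0 \<le> C2 * Sr" using C10 C20 I0 Sr0 by auto
      ultimately show "I + R \<le> (1 + C1 + C2) * (I + Sr)" using Sr0 by linarith
    qed simp
    finally have "c * (L + \<beta>) powr p \<le> c * (2 powr p * ((1 + C1 + C2) * (I + Sr)))"
      using cpos by simp
    also have "\<dots> = I + Sr" unfolding c_def using C10 C20 by simp
    finally have key: "c * (L + \<beta>) powr p \<le> I + Sr" .
    have "ennreal c * epow (besov_norm s p f) p = ennreal (c * (L + \<beta>) powr p)"
      using cpos by (simp add: bn ennreal_mult)
    also have "\<dots> \<le> ennreal (I + Sr)" using key by (rule ennreal_leI)
    also have "\<dots> = epow (Lp_norm p f) p + S" using I0 Sr0 by (simp add: EL Se)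
    finally show "ennreal (1 / (2 powr p * (1 + C1 + C2))) * epow (besov_norm s p f) p \<le> epow (Lp_norm p f) p + S" unfolding c_def .
  qed
qed

lemma ae_shift:
  fixes h :: "'a::euclidean_space"
  assumes "AE x in lborel. P x" shows "AE x in lborel. P (x + h)"
proof -
  from AE_E[OF assms] obtain N where N0: "{x\<in>space lborel. \<not> P x} \<subseteq> N" "emeasure lborel N = 0" "N \<in> sets lborel"
    by blast
  then have N: "{x\<in>space lborel. \<not> P x} \<subseteq> N" "N \<in> null_sets lborel" by auto
  have "{x. x - (- h) \<in> N} \<in> null_sets lborel" by (rule null_sets_translation[OF N(2)])
  moreover have "{x\<in>space lborel. \<not> P (x + h)} \<subseteq> {x. x - (- h) \<in> N}" using N(1) by auto
  ultimately show ?thesis by (rule AE_I')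
qed

lemma transfer:
  fixes f :: "'a::euclidean_space \<Rightarrow> real"
  assumes "in_Lp p f"
  obtains f' where "f' \<in> borel_measurable borel" "Ip p f' < \<infinity>" "Lp_norm p f = Lp_norm p f'"
    "\<And>s. besov_seminorm s p f = besov_seminorm s p f'"
    "\<And>r s. moll_energy r s p f = moll_energy r s p f'"
proof -
  from assms have fm: "f \<in> borel_measurable lebesgue" and fi: "integrable lebesgue (\<lambda>x. \<bar>f x\<bar> powr p)"
    by (auto simp: in_Lp_def)
  obtain f' where f'l: "f' \<in> borel_measurable lborel" and ae: "AE x in lborel. f x = f' x"
    using completion_ex_borel_measurable_real[OF fm] by auto
  have f'[measurable]: "f' \<in> borel_measurable borel" using f'l by simp
  have ae2: "AE x in lborel. f (x + y) = f' (x + y) \<and> f x = f' x" for y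
    using ae ae_shift[OF ae, of y] by eventually_elim simp
  have "Ip p f' = (\<integral>\<^sup>+ x. ennreal (\<bar>f x\<bar> powr p) \<partial>lborel)"
    unfolding Ip_def by (intro nn_integral_cong_AE) (use ae in \<open>eventually_elim, simp\<close>)
  also have "\<dots> = (\<integral>\<^sup>+ x. ennreal (\<bar>f x\<bar> powr p) \<partial>lebesgue)" by (simp add: nn_integral_completion)
  also have "\<dots> = ennreal (integral\<^sup>L lebesgue (\<lambda>x. \<bar>f x\<bar> powr p))"
    by (rule nn_integral_eq_integral[OF fi]) simp
  finally have fin: "Ip p f' < \<infinity>" by simp
  have gdq: "(\<integral>\<^sup>+ x. ennreal (\<bar>f (x + h) - f x\<bar> powr p) \<partial>lborel) = (\<integral>\<^sup>+ x. ennreal (\<bar>f' (x + h) - f' x\<bar> powr p) \<partial>lborel)" for h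
    by (intro nn_integral_cong_AE) (use ae2[of h] in \<open>eventually_elim, simp\<close>)
  have Lq: "Lp_norm p f = Lp_norm p f'"
    unfolding Lp_norm_def nn_integral_completion
    by (intro arg_cong[where f="\<lambda>x. epow x (1/p)"] nn_integral_cong_AE) (use ae in \<open>eventually_elim, simp\<close>)
  have Bq: "besov_seminorm s p f = besov_seminorm s p f'" for s
    unfolding besov_seminorm_def Lp_norm_def nn_integral_completion gdq ..
  have Mq: "moll_energy r s p f = moll_energy r s p f'" for r s
  proof (rule ext)
    fix \<epsilon>
    show "moll_energy r s p f \<epsilon> = moll_energy r s p f' \<epsilon>"
      unfolding moll_energy_def nn_integral_completion
      apply (rule nn_integral_cong)
      subgoal for y by (rule nn_integral_cong_AE) (use ae2[of y] in \<open>eventually_elim, simp add: add.commute\<close>)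
      done
  qed
  show thesis by (rule that[OF f' fin Lq Bq Mq])
qed

theorem proposition1p2:
  fixes \<rho> :: "'a::euclidean_space \<Rightarrow> real" and s p :: real
  assumes "0 < s" "s < 1" "1 \<le> p"
    and "integrable lebesgue \<rho>"
    and "mollifier_family (rescale \<rho>)"
  shows "(\<forall>f. in_Lp p f \<longrightarrow>
            (in_Besov s p f \<longleftrightarrow> Limsup (at_right 0) (moll_energy (rescale \<rho>) s p f) < top))
       \<and> (\<exists>c C :: real. 0 < c \<and> c \<le> C \<and>
            (\<forall>f. in_Lp p f \<longrightarrow>
               ennreal c * epow (besov_norm s p f) p
                 \<le> epow (Lp_norm p f) p + (SUP \<epsilon>\<in>{0<..<1}. moll_energy (rescale \<rho>) s p f \<epsilon>)
             \<and> epow (Lp_norm p f) p + (SUP \<epsilon>\<in>{0<..<1}. moll_energy (rescale \<rho>) s p f \<epsilon>)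
                 \<le> ennreal C * epow (besov_norm s p f) p))"
proof -
  have s: "0 < s" and p: "1 \<le> p" using assms by auto
  have moll: "\<And>\<epsilon>. 0 < \<epsilon> \<Longrightarrow> integrable lebesgue (rescale \<rho> \<epsilon>) \<and> (AE h in lebesgue. 0 \<le> rescale \<rho> \<epsilon> h)
                  \<and> integral\<^sup>L lebesgue (rescale \<rho> \<epsilon>) = 1"
    using assms(5) unfolding mollifier_family_def by blast
  have r1: "rescale \<rho> 1 = \<rho>" by (simp add: rescale_def fun_eq_iff)
  from moll[of 1] r1 have i1: "integrable lebesgue \<rho>" "AE h in lebesgue. 0 \<le> \<rho> h" "integral\<^sup>L lebesgue \<rho> = 1"
    by auto
  obtain K :: "'a set" and b \<delta> d m where K: "compact K" "K \<subseteq> cball 0 b" "0 < \<delta>"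
    "\<And>u. u \<in> K \<Longrightarrow> \<delta> \<le> \<rho> u" and dm0: "0 < d" "0 < m"
    and Kd: "\<And>w. norm w < d \<Longrightarrow> ennreal m \<le> emeasure lebesgue {v\<in>K. v + w \<in> K}"
    by (rule exists_K[OF i1]) (rule that; assumption)
  define b' where "b' = max b 1"
  have Kb': "K \<subseteq> cball 0 b'" using K(2) by (auto simp: b'_def)
  have b'0: "0 < b'" by (simp add: b'_def)
  note KK = K(1) Kb' b'0 K(3) K(4)
  define C1 where "C1 = 2 powr p * 2 * b' powr (s * p) * (2 / d) powr (s * p) / (\<delta> * m)"
  define C2 where "C2 = 2 powr p * 2 / (1 * d / 2) powr (s * p)"
  have C10: "0 \<le> C1" unfolding C1_def using K dm0 b'0 by simp
  have C20: "0 \<le> C2" unfolding C2_def by simp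
  define c where "c = 1 / (2 powr p * (1 + C1 + C2))"
  have cpos: "0 < c" unfolding c_def using C10 C20 by simp
  have c1: "c \<le> 1"
  proof -
    have "1 \<le> 2 powr p * (1 + C1 + C2)"
    proof -
      have "1 \<le> (2::real) powr p" by (rule ge_one_powr_ge_zero) (use p in auto)
      moreover have "1 \<le> 1 + C1 + C2" using C10 C20 by simp
      ultimately show ?thesis using mult_mono[of 1 "2 powr p" 1 "1 + C1 + C2"] by simp
    qed
    then show ?thesis unfolding c_def by simp
  qed
  have main: "(in_Besov s p f \<longleftrightarrow> Limsup (at_right 0) (moll_energy (rescale \<rho>) s p f) < top)
      \<and> ennreal c * epow (besov_norm s p f) p
          \<le> epow (Lp_norm p f) p + (SUP \<epsilon>\<in>{0<..<1}. moll_energy (rescale \<rho>) s p f \<epsilon>)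
      \<and> epow (Lp_norm p f) p + (SUP \<epsilon>\<in>{0<..<1}. moll_energy (rescale \<rho>) s p f \<epsilon>)
          \<le> ennreal 1 * epow (besov_norm s p f) p"
    if f: "in_Lp p f" for f
  proof -
    obtain f' where f': "f' \<in> borel_measurable borel" "Ip p f' < \<infinity>" "Lp_norm p f = Lp_norm p f'"
      "\<And>s. besov_seminorm s p f = besov_seminorm s p f'"
      "\<And>r s. moll_energy r s p f = moll_energy r s p f'"
      using transfer[OF f] by blast
    have bn: "besov_norm s p f = besov_norm s p f'" unfolding besov_norm_def using f' by simp
    note cr = core[OF f'(1,2) p s KK Kd dm0 moll]
    have eB: "in_Besov s p f \<longleftrightarrow> besov_seminorm s p f' < \<infinity>"
      using f f'(4) by (simp add: in_Besov_def)
    have m1: "in_Besov s p f \<longleftrightarrow> Limsup (at_right 0) (moll_energy (rescale \<rho>) s p f) < top"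
      unfolding eB f'(5) using cr(1) by simp
    have m2: "ennreal c * epow (besov_norm s p f) p
          \<le> epow (Lp_norm p f) p + (SUP \<epsilon>\<in>{0<..<1}. moll_energy (rescale \<rho>) s p f \<epsilon>)"
      unfolding bn f'(3) f'(5) c_def C1_def C2_def by (rule cr(2))
    have m3: "epow (Lp_norm p f) p + (SUP \<epsilon>\<in>{0<..<1}. moll_energy (rescale \<rho>) s p f \<epsilon>)
          \<le> ennreal 1 * epow (besov_norm s p f) p"
      unfolding bn f'(3) f'(5) by (rule cr(3))
    from m1 m2 m3 show ?thesis by blast
  qed
  show ?thesis
  proof (intro conjI allI impI)
    fix f :: "'a \<Rightarrow> real" assume f: "in_Lp p f"
    show "in_Besov s p f \<longleftrightarrow> Limsup (at_right 0) (moll_energy (rescale \<rho>) s p f) < top"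
      using main[OF f] by (rule conjunct1)
  next
    show "\<exists>c C :: real. 0 < c \<and> c \<le> C \<and>
            (\<forall>f. in_Lp p f \<longrightarrow>
               ennreal c * epow (besov_norm s p f) p
                 \<le> epow (Lp_norm p f) p + (SUP \<epsilon>\<in>{0<..<1}. moll_energy (rescale \<rho>) s p f \<epsilon>)
             \<and> epow (Lp_norm p f) p + (SUP \<epsilon>\<in>{0<..<1}. moll_energy (rescale \<rho>) s p f \<epsilon>)
                 \<le> ennreal C * epow (besov_norm s p f) p)"
    proof -
      have all: "\<forall>f. in_Lp p f \<longrightarrow>
               ennreal c * epow (besov_norm s p f) p
                 \<le> epow (Lp_norm p f) p + (SUP \<epsilon>\<in>{0<..<1}. moll_energy (rescale \<rho>) s p f \<epsilon>)
             \<and> epow (Lp_norm p f) p + (SUP \<epsilon>\<in>{0<..<1}. moll_energy (rescale \<rho>) s p f \<epsilon>)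
                 \<le> ennreal 1 * epow (besov_norm s p f) p"
        using main by blast
      show ?thesis
        apply (rule exI[of _ c], rule exI[of _ "1::real"])
        using cpos c1 all by blast
    qed
  qed
qed

end
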